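(* Let $\Omega\subseteq\mathbb{C}$ be an open disc centered at the origin and let $M:\Omega\to\mathbb{C}^{n\times n}$ be analytic, written as $M(\lambda)=M_1f_1(\lambda)+\cdots+M_mf_m(\lambda)$ with constant matrices $M_i\in\mathbb{C}^{n\times n}$ and scalar functions $f_i$ analytic in $\Omega$. Assume $M(0)$ is invertible. Let $\mathcal{B}$ be the operator defined in the context. (1) Suppose $\Lambda\in\mathbb{C}^{p\times p}$ is invertible and $(\Psi,\Lambda^{-1})$ is an invariant pair of $\mathcal{B}$, i.e. $\Psi:\mathbb{R}\to\mathbb{C}^{n\times p}$ has columns in the domain of $\mathcal{B}$ and $(\mathcal{B}\Psi)(\theta)=\Psi(\theta)\Lambda^{-1}$ for all $\theta$. Then there is a matrix $Y\in\mathbb{C}^{n\times p}$ such that $\Psi(\theta)=Y\exp(\theta\Lambda)$. (2) Let $\Lambda\in\mathbb{C}^{p\times p}$ be invertible with $\sigma(\Lambda)\subset\Omega$ and let $Y\in\mathbb{C}^{n\times p}$. Set $\Psi(\theta):=Y\exp(\theta\Lambda)$. Then the following are equivalent: (i) $(\mathcal{B}\Psi)(\theta)=\Psi(\theta)\Lambda^{-1}$ for all $\theta$; (ii) $\mathbb{M}(Y,\Lambda):=M_1Yf_1(\Lambda)+\cdots+M_mYf_m(\Lambda)=0$, where $f_i(\Lambda)$ denotes the matrix function.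
   Context: Define $B:\Omega\to\mathbb{C}^{n\times n}$ by $B(\lambda)=M(0)^{-1}\frac{M(0)-M(\lambda)}{\lambda}$ for $\lambda\neq 0$, extended analytically to $\lambda=0$. The operator $\mathcal{B}$ has domain $\mathcal{D}(\mathcal{B})=\{\varphi\in C^\infty(\mathbb{R},\mathbb{C}^n):\sum_{i=0}^\infty \frac{1}{i!}B^{(i)}(0)\varphi^{(i)}(0)\text{ converges}\}$ and acts by $(\mathcal{B}\varphi)(\theta)=\int_0^\theta\varphi(\hat\theta)\,d\hat\theta+\sum_{i=0}^\infty\frac{1}{i!}B^{(i)}(0)\varphi^{(i)}(0)$. For a matrix-valued function $\Psi=(\psi_1,\ldots,\psi_p)$, $\mathcal{B}\Psi:=(\mathcal{B}\psi_1,\ldots,\mathcal{B}\psi_p)$ columnwise. *)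

theory Defs
  imports "HOL-Analysis.Analysis"
begin

definition cscale :: "complex \<Rightarrow> complex^'b^'a \<Rightarrow> complex^'b^'a" where
  "cscale c A = (\<chi> i j. c * A $ i $ j)"

definition matpow :: "complex^'n^'n \<Rightarrow> nat \<Rightarrow> complex^'n^'n" where
  "matpow A k = (((**) A) ^^ k) (mat 1)"

definition mexp :: "complex^'n^'n \<Rightarrow> complex^'n^'n" where
  "mexp A = (\<Sum>k. (1 / fact k) *\<^sub>R matpow A k)"

text \<open>Matrix function f(A) of a scalar function f analytic on a disc centred at the
  origin, via its Taylor series at 0: f(A) = sum_k f^(k)(0)/k! A^k.\<close>
definition matfun :: "(complex \<Rightarrow> complex) \<Rightarrow> complex^'n^'n \<Rightarrow> complex^'n^'n" where
  "matfun f A = (\<Sum>k. cscale ((deriv ^^ k) f 0 / fact k) (matpow A k))"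

definition mspec :: "complex^'n^'n \<Rightarrow> complex set" where
  "mspec A = {z. det (mat z - A) = 0}"

definition vderiv :: "(real \<Rightarrow> 'a::real_normed_vector) \<Rightarrow> real \<Rightarrow> 'a" where
  "vderiv g t = vector_derivative g (at t)"

definition C_inf :: "(real \<Rightarrow> 'a::real_normed_vector) \<Rightarrow> bool" where
  "C_inf g \<longleftrightarrow> (\<forall>k t. ((vderiv ^^ k) g has_vector_derivative (vderiv ^^ Suc k) g t) (at t))"

definition int0 :: "(real \<Rightarrow> complex^'n) \<Rightarrow> real \<Rightarrow> complex^'n" where
  "int0 g \<theta> = (if 0 \<le> \<theta> then integral {0..\<theta>} g else - integral {\<theta>..0} g)"

definition Bcoef :: "(complex \<Rightarrow> complex^'n^'n) \<Rightarrow> nat \<Rightarrow> complex^'n^'n" where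
  "Bcoef B i = (\<chi> a b. (deriv ^^ i) (\<lambda>z. B z $ a $ b) 0)"

definition Bser :: "(complex \<Rightarrow> complex^'n^'n) \<Rightarrow> (real \<Rightarrow> complex^'n) \<Rightarrow> nat \<Rightarrow> complex^'n" where
  "Bser B \<phi> i = cscale (1 / fact i) (Bcoef B i) *v (vderiv ^^ i) \<phi> 0"

definition opB_dom :: "(complex \<Rightarrow> complex^'n^'n) \<Rightarrow> (real \<Rightarrow> complex^'n) set" where
  "opB_dom B = {\<phi>. C_inf \<phi> \<and> summable (Bser B \<phi>)}"

definition opB :: "(complex \<Rightarrow> complex^'n^'n) \<Rightarrow> (real \<Rightarrow> complex^'n) \<Rightarrow> real \<Rightarrow> complex^'n" where
  "opB B \<phi> \<theta> = int0 \<phi> \<theta> + (\<Sum>i. Bser B \<phi> i)"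

definition opBm :: "(complex \<Rightarrow> complex^'n^'n) \<Rightarrow> (real \<Rightarrow> complex^'p^'n) \<Rightarrow> real \<Rightarrow> complex^'p^'n" where
  "opBm B \<Psi> \<theta> = (\<chi> i k. opB B (\<lambda>t. column k (\<Psi> t)) \<theta> $ i)"

definition inv_pair :: "(complex \<Rightarrow> complex^'n^'n) \<Rightarrow> (real \<Rightarrow> complex^'p^'n) \<Rightarrow> complex^'p^'p \<Rightarrow> bool" where
  "inv_pair B \<Psi> L \<longleftrightarrow> (\<forall>k. (\<lambda>t. column k (\<Psi> t)) \<in> opB_dom B) \<and> (\<forall>\<theta>. opBm B \<Psi> \<theta> = \<Psi> \<theta> ** L)"

end

theory Submission
  imports Defs "HOL-Complex_Analysis.Complex_Analysis"
begin


no_notation fps_nth (infixl \<open>$\<close> 75)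

lemma mvec_scaleR: "(A::complex^'n^'m) *v (c *\<^sub>R x) = c *\<^sub>R (A *v x)"
  by (simp add: vec_eq_iff matrix_vector_mult_def scaleR_sum_right)

lemma bl_mvec: "bounded_linear (\<lambda>v::complex^'n. (A::complex^'n^'m) *v v)"
  unfolding linear_conv_bounded_linear[symmetric]
  by (rule linearI) (simp_all add: matrix_vector_right_distrib mvec_scaleR)

lemma mat_eq_by_mvec:
  assumes "\<And>v. (A::complex^'n^'m) *v v = B *v v" shows "A = B"
proof -
  have "A $ i $ j = B $ i $ j" for i j
  proof -
    have "(A *v axis j 1) $ i = (B *v axis j 1) $ i" using assms by simp
    then show ?thesis by (simp add: matrix_vector_mult_def axis_def if_distrib cong: if_cong)
  qed
  then show ?thesis by (simp add: vec_eq_iff)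
qed

lemma scaleR_mvec: "((r::real) *\<^sub>R (A::complex^'n^'m)) *v v = r *\<^sub>R (A *v v)"
  by (simp add: vec_eq_iff matrix_vector_mult_def scaleR_sum_right)

lemma add_mvec: "((A::complex^'n^'m) + B) *v v = A *v v + B *v v"
  by (simp add: vec_eq_iff matrix_vector_mult_def sum.distrib algebra_simps)

lemma scaleR_mmul_left: "((r::real) *\<^sub>R (A::complex^'n^'m)) ** B = r *\<^sub>R (A ** B)"
  by (simp add: vec_eq_iff matrix_matrix_mult_def scaleR_sum_right)

lemma scaleR_mmul_right: "(A::complex^'n^'m) ** ((r::real) *\<^sub>R B) = r *\<^sub>R (A ** B)"
  by (simp add: vec_eq_iff matrix_matrix_mult_def scaleR_sum_right)

typedef ('n::finite) sqm = "UNIV :: (complex^'n^'n) set" morphisms mrep mabs by simp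
setup_lifting type_definition_sqm

instantiation sqm :: (finite) real_normed_algebra_1
begin
lift_definition zero_sqm :: "'a sqm" is 0 .
lift_definition one_sqm :: "'a sqm" is "mat 1" .
lift_definition plus_sqm :: "'a sqm \<Rightarrow> 'a sqm \<Rightarrow> 'a sqm" is "(+)" .
lift_definition minus_sqm :: "'a sqm \<Rightarrow> 'a sqm \<Rightarrow> 'a sqm" is "(-)" .
lift_definition uminus_sqm :: "'a sqm \<Rightarrow> 'a sqm" is uminus .
lift_definition times_sqm :: "'a sqm \<Rightarrow> 'a sqm \<Rightarrow> 'a sqm" is "(**)" .
lift_definition scaleR_sqm :: "real \<Rightarrow> 'a sqm \<Rightarrow> 'a sqm" is "(*\<^sub>R)" .
lift_definition norm_sqm :: "'a sqm \<Rightarrow> real" is "\<lambda>A. onorm (\<lambda>v::complex^'a. A *v v)" .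
definition dist_sqm :: "'a sqm \<Rightarrow> 'a sqm \<Rightarrow> real" where "dist_sqm a b = norm (a - b)"
definition uniformity_sqm :: "('a sqm \<times> 'a sqm) filter" where
  "uniformity_sqm = (INF e\<in>{0 <..}. principal {(x, y). dist x y < e})"
definition open_sqm :: "'a sqm set \<Rightarrow> bool" where
  "open_sqm S = (\<forall>x\<in>S. \<forall>\<^sub>F (x', y) in uniformity. x' = x \<longrightarrow> y \<in> S)"
definition sgn_sqm :: "'a sqm \<Rightarrow> 'a sqm" where "sgn_sqm x = scaleR (inverse (norm x)) x"

instance
proof
  fix a b c :: "'a sqm" and r s :: real
  show "a * b * c = a * (b * c)" by transfer (simp add: matrix_mul_assoc[symmetric])
  show "(a + b) * c = a * c + b * c" by transfer (simp add: vec_eq_iff matrix_matrix_mult_def sum.distrib distrib_right)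
  show "a * (b + c) = a * b + a * c" by transfer (simp add: matrix_add_ldistrib)
  show "1 * a = a" by transfer simp
  show "a * 1 = a" by transfer simp
  show "(0::'a sqm) \<noteq> 1" by transfer (simp add: vec_eq_iff mat_def)
  show "a + b + c = a + (b + c)" by transfer simp
  show "a + b = b + a" by transfer simp
  show "0 + a = a" by transfer simp
  show "- a + a = 0" by transfer simp
  show "a - b = a + - b" by transfer simp
  show "r *\<^sub>R (a + b) = r *\<^sub>R a + r *\<^sub>R b" by transfer (simp add: scaleR_add_right)
  show "(r + s) *\<^sub>R a = r *\<^sub>R a + s *\<^sub>R a" by transfer (simp add: scaleR_add_left)
  show "r *\<^sub>R s *\<^sub>R a = (r * s) *\<^sub>R a" by transfer simp
  show "1 *\<^sub>R a = a" by transfer simp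
  show "r *\<^sub>R a * b = r *\<^sub>R (a * b)" by transfer (simp add: scaleR_mmul_left)
  show "a * r *\<^sub>R b = r *\<^sub>R (a * b)" by transfer (simp add: scaleR_mmul_right)
  show "dist a b = norm (a - b)" by (simp add: dist_sqm_def)
  show "sgn a = inverse (norm a) *\<^sub>R a" by (simp add: sgn_sqm_def)
  show "(uniformity :: ('a sqm \<times> 'a sqm) filter) = (INF e\<in>{0 <..}. principal {(x, y). dist x y < e})"
    by (simp add: uniformity_sqm_def)
  fix U :: "'a sqm set"
  show "open U = (\<forall>x\<in>U. \<forall>\<^sub>F (x', y) in uniformity. x' = x \<longrightarrow> y \<in> U)"
    by (simp add: open_sqm_def)
  show "(norm a = 0) = (a = 0)"
  proof transfer
    fix a :: "complex^'a^'a"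
    have "(onorm ((*v) a) = 0) = (\<forall>x. a *v x = 0)" by (rule onorm_eq_0[OF bl_mvec])
    also have "\<dots> = (a = 0)"
    proof
      assume "\<forall>x. a *v x = 0"
      then show "a = 0" by (intro mat_eq_by_mvec) simp
    qed simp
    finally show "(onorm ((*v) a) = 0) = (a = 0)" .
  qed
  show "norm (a + b) \<le> norm a + norm b"
  proof transfer
    fix a b :: "complex^'a^'a"
    have "onorm ((*v) (a + b)) = onorm (\<lambda>v. a *v v + b *v v)"
      by (rule arg_cong[where f=onorm]) (simp add: fun_eq_iff add_mvec)
    also have "\<dots> \<le> onorm ((*v) a) + onorm ((*v) b)"
      by (rule onorm_triangle[OF bl_mvec bl_mvec])
    finally show "onorm ((*v) (a + b)) \<le> onorm ((*v) a) + onorm ((*v) b)" .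
  qed
  show "norm (r *\<^sub>R a) = \<bar>r\<bar> * norm a"
  proof transfer
    fix r :: real and a :: "complex^'a^'a"
    have "onorm ((*v) (r *\<^sub>R a)) = onorm (\<lambda>v. r *\<^sub>R (a *v v))"
      by (rule arg_cong[where f=onorm]) (simp add: fun_eq_iff scaleR_mvec)
    also have "\<dots> = \<bar>r\<bar> * onorm ((*v) a)"
      by (rule onorm_scaleR[OF bl_mvec])
    finally show "onorm ((*v) (r *\<^sub>R a)) = \<bar>r\<bar> * onorm ((*v) a)" .
  qed
  show "norm (a * b) \<le> norm a * norm b"
  proof transfer
    fix a b :: "complex^'a^'a"
    have "onorm ((*v) (a ** b)) = onorm ((\<lambda>v. a *v v) o (\<lambda>v. b *v v))"
      by (rule arg_cong[where f=onorm]) (simp add: fun_eq_iff matrix_vector_mul_assoc)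
    also have "\<dots> \<le> onorm ((*v) a) * onorm ((*v) b)"
      by (rule onorm_compose[OF bl_mvec bl_mvec])
    finally show "onorm ((*v) (a ** b)) \<le> onorm ((*v) a) * onorm ((*v) b)" .
  qed
  show "norm (1::'a sqm) = 1"
  proof transfer
    have "onorm ((*v) (mat 1 :: complex^'a^'a)) = onorm (\<lambda>v::complex^'a. v)"
      by (rule arg_cong[where f=onorm]) (simp add: fun_eq_iff)
    also have "\<dots> = 1" by (rule onorm_id)
    finally show "onorm ((*v) (mat 1 :: complex^'a^'a)) = 1" .
  qed
qed
end



lemma mrep_add[simp]: "mrep (a + b) = mrep a + mrep b" by (simp add: plus_sqm.rep_eq)
lemma mrep_diff[simp]: "mrep (a - b) = mrep a - mrep b" by (simp add: minus_sqm.rep_eq)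
lemma mrep_uminus[simp]: "mrep (- a) = - mrep a" by (simp add: uminus_sqm.rep_eq)
lemma mrep_mult[simp]: "mrep (a * b) = mrep a ** mrep b" by (simp add: times_sqm.rep_eq)
lemma mrep_one[simp]: "mrep 1 = mat 1" by (simp add: one_sqm.rep_eq)
lemma mrep_zero[simp]: "mrep 0 = 0" by (simp add: zero_sqm.rep_eq)
lemma mrep_scaleR[simp]: "mrep (r *\<^sub>R a) = r *\<^sub>R mrep a" by (simp add: scaleR_sqm.rep_eq)
lemma mrep_mabs[simp]: "mrep (mabs A) = A" by (simp add: mabs_inverse)
lemma mabs_mrep[simp]: "mabs (mrep a) = a" by (simp add: mrep_inverse)
lemma norm_sqm_def': "norm a = onorm (\<lambda>v. mrep a *v v)" by (simp add: norm_sqm.rep_eq)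

lemma norm_vec_l1: "norm (x::'a::real_normed_vector^'n) \<le> (\<Sum>i\<in>UNIV. norm (x$i))"
  by (simp add: norm_vec_def L2_set_le_sum)

lemma entry_le_vec: "cmod (A $ i $ j) \<le> norm (A::complex^'n^'m)"
  using Finite_Cartesian_Product.norm_nth_le[of "A$i" j] Finite_Cartesian_Product.norm_nth_le[of A i] by linarith

lemma vec_le_entries: "norm (A::complex^'n^'m) \<le> (\<Sum>i\<in>UNIV. \<Sum>j\<in>UNIV. cmod (A $ i $ j))"
  by (rule order_trans[OF norm_vec_l1]) (intro sum_mono norm_vec_l1)

lemma norm_axis_c: "norm (axis j (1::complex) :: complex^'n) \<le> 1"
proof -
  have "norm (axis j (1::complex) :: complex^'n) \<le> (\<Sum>i\<in>UNIV. norm ((axis j (1::complex) :: complex^'n) $ i))"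
    by (rule norm_vec_l1)
  also have "\<dots> = 1" by (simp add: axis_def if_distrib cong: if_cong)
  finally show ?thesis .
qed

lemma mvec_axis_entry: "((A::complex^'n^'m) *v axis j 1) $ i = A $ i $ j"
  by (simp add: matrix_vector_mult_def axis_def if_distrib cong: if_cong)

lemma entry_le_sqm: "cmod (mrep a $ i $ j) \<le> norm a"
proof -
  have "cmod (mrep a $ i $ j) = cmod ((mrep a *v axis j 1) $ i)" by (simp add: mvec_axis_entry)
  also have "\<dots> \<le> norm (mrep a *v axis j 1)" by (rule Finite_Cartesian_Product.norm_nth_le)
  also have "\<dots> \<le> onorm (\<lambda>v. mrep a *v v) * norm (axis j (1::complex) :: complex^'a)"
    by (rule onorm[OF bl_mvec])
  also have "\<dots> \<le> onorm (\<lambda>v. mrep a *v v) * 1"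
    by (intro mult_left_mono norm_axis_c onorm_pos_le bl_mvec)
  finally show ?thesis by (simp add: norm_sqm_def')
qed

lemma mvec_norm_le: "norm ((A::complex^'n^'m) *v v) \<le> (\<Sum>i\<in>UNIV. \<Sum>j\<in>UNIV. cmod (A $ i $ j)) * norm v"
proof -
  have "norm (A *v v) \<le> (\<Sum>i\<in>UNIV. norm ((A *v v) $ i))" by (rule norm_vec_l1)
  also have "\<dots> \<le> (\<Sum>i\<in>UNIV. \<Sum>j\<in>UNIV. cmod (A $ i $ j) * norm v)"
  proof (rule sum_mono)
    fix i
    have "norm ((A *v v) $ i) = cmod (\<Sum>j\<in>UNIV. A $ i $ j * v $ j)" by (simp add: matrix_vector_mult_def)
    also have "\<dots> \<le> (\<Sum>j\<in>UNIV. cmod (A $ i $ j * v $ j))" by (rule norm_sum)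
    also have "\<dots> \<le> (\<Sum>j\<in>UNIV. cmod (A $ i $ j) * norm v)"
      by (intro sum_mono) (simp add: norm_mult mult_left_mono[OF Finite_Cartesian_Product.norm_nth_le])
    finally show "norm ((A *v v) $ i) \<le> (\<Sum>j\<in>UNIV. cmod (A $ i $ j) * norm v)" .
  qed
  also have "\<dots> = (\<Sum>i\<in>UNIV. \<Sum>j\<in>UNIV. cmod (A $ i $ j)) * norm v"
    by (simp add: sum_distrib_right)
  finally show ?thesis .
qed

lemma sqm_le_entries: "norm a \<le> (\<Sum>i\<in>UNIV. \<Sum>j\<in>UNIV. cmod (mrep a $ i $ j))"
  unfolding norm_sqm_def'
  by (rule onorm_bound) (simp_all add: sum_nonneg mvec_norm_le)

lemma bl_mrep: "bounded_linear (mrep :: 'n::finite sqm \<Rightarrow> complex^'n^'n)"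
proof (rule bounded_linear_intro[where K="of_nat (CARD('n) * CARD('n))"])
  fix a :: "'n sqm"
  have "norm (mrep a) \<le> (\<Sum>i\<in>UNIV. \<Sum>j\<in>UNIV. cmod (mrep a $ i $ j))" by (rule vec_le_entries)
  also have "\<dots> \<le> (\<Sum>i\<in>(UNIV::'n set). \<Sum>j\<in>(UNIV::'n set). norm a)"
    by (intro sum_mono entry_le_sqm)
  finally show "norm (mrep a) \<le> norm a * of_nat (CARD('n) * CARD('n))" by (simp add: algebra_simps)
qed simp_all

lemma bl_mabs: "bounded_linear (mabs :: complex^'n^'n \<Rightarrow> 'n::finite sqm)"
proof (rule bounded_linear_intro[where K="of_nat (CARD('n) * CARD('n))"])
  fix A :: "complex^'n^'n"
  have "norm (mabs A) \<le> (\<Sum>i\<in>UNIV. \<Sum>j\<in>UNIV. cmod (A $ i $ j))" using sqm_le_entries[of "mabs A"] by simp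
  also have "\<dots> \<le> (\<Sum>i\<in>(UNIV::'n set). \<Sum>j\<in>(UNIV::'n set). norm A)"
    by (intro sum_mono entry_le_vec)
  finally show "norm (mabs A) \<le> norm A * of_nat (CARD('n) * CARD('n))" by (simp add: algebra_simps)
next
  fix A B :: "complex^'n^'n"
  show "mabs (A + B) = mabs A + mabs B" by (metis mrep_add mabs_mrep mrep_mabs)
next
  fix r and A :: "complex^'n^'n"
  show "mabs (r *\<^sub>R A) = r *\<^sub>R mabs A" by (metis mrep_scaleR mabs_mrep mrep_mabs)
qed

instance sqm :: (finite) banach
proof
  fix X :: "nat \<Rightarrow> 'a sqm" assume "Cauchy X"
  then have "Cauchy (\<lambda>n. mrep (X n))" by (rule bounded_linear.Cauchy[OF bl_mrep])
  then obtain L where "(\<lambda>n. mrep (X n)) \<longlonglongrightarrow> L" using Cauchy_convergent_iff convergent_def by blast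
  then have "(\<lambda>n. mabs (mrep (X n))) \<longlonglongrightarrow> mabs L" by (rule bounded_linear.tendsto[OF bl_mabs])
  then show "convergent X" by (auto simp: convergent_def)
qed

lemma matpow_Suc: "matpow A (Suc k) = A ** matpow A k"
  by (simp add: matpow_def)
lemma matpow_0[simp]: "matpow A 0 = mat 1"
  by (simp add: matpow_def)

lemma mrep_power: "mrep (x ^ k) = matpow (mrep x) k"
  by (induction k) (simp_all add: matpow_Suc)

lemma mexp_eq: "mexp A = mrep (exp (mabs A))"
proof -
  have "mrep (exp (mabs A)) = mrep (\<Sum>n. mabs A ^ n /\<^sub>R fact n)" by (simp add: exp_def)
  also have "\<dots> = (\<Sum>n. mrep (mabs A ^ n /\<^sub>R fact n))"
    by (rule bounded_linear.suminf[OF bl_mrep summable_exp_generic])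
  also have "\<dots> = mexp A" by (simp add: mexp_def mrep_power divide_inverse)
  finally show ?thesis by simp
qed

lemma minv: "invertible (A::'a::semiring_1^'n^'n) \<Longrightarrow> A ** matrix_inv A = mat 1 \<and> matrix_inv A ** A = mat 1"
  unfolding matrix_inv_def invertible_def by (rule someI_ex)

lemma minv_unique:
  fixes A B :: "'a::comm_semiring_1^'n^'n"
  assumes "A ** B = mat 1" "B ** A = mat 1" shows "matrix_inv A = B"
proof -
  have inv: "invertible A" using assms by (auto simp: invertible_def)
  have "matrix_inv A = (B ** A) ** matrix_inv A" using assms by simp
  also have "\<dots> = B ** (A ** matrix_inv A)" by (simp add: matrix_mul_assoc)
  also have "\<dots> = B" using minv[OF inv] by simp
  finally show ?thesis .
qed



lemma cont_det:
  assumes "\<And>i j. continuous_on S (\<lambda>z. F z $ i $ j)"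
  shows "continuous_on S (\<lambda>z. det (F z :: complex^'n^'n))"
  unfolding det_def by (intro continuous_intros assms)

lemma holo_det:
  assumes "\<And>i j. (\<lambda>z. F z $ i $ j) holomorphic_on S"
  shows "(\<lambda>z. det (F z :: complex^'n^'n)) holomorphic_on S"
  unfolding det_def by (intro holomorphic_intros assms)

lemma holo_det_lambda:
  assumes "\<And>i j. (\<lambda>z. f z i j) holomorphic_on S"
  shows "(\<lambda>z. det ((\<chi> i j. f z i j) :: complex^'n^'n)) holomorphic_on S"
  by (rule holo_det) (simp add: assms)

lemma cscale_nth[simp]: "cscale c A $ i $ j = c * A $ i $ j"
  by (simp add: cscale_def)

lemma cscale_mmul_left: "cscale c A ** B = cscale c (A ** B)"
  by (simp add: vec_eq_iff matrix_matrix_mult_def sum_distrib_left mult.assoc)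

lemma cscale_mmul_right: "A ** cscale c B = cscale c (A ** B)"
  by (simp add: vec_eq_iff matrix_matrix_mult_def sum_distrib_left mult_ac)

lemma cscale_mult: "cscale c (cscale d A) = cscale (c * d) A"
  by (simp add: vec_eq_iff mult.assoc)

lemma cscale_zero_right[simp]: "cscale c 0 = 0" by (simp add: vec_eq_iff)
lemma cscale_0[simp]: "cscale 0 A = 0" by (simp add: vec_eq_iff)
lemma cscale_1[simp]: "cscale 1 A = A" by (simp add: vec_eq_iff)
lemma cscale_add_left: "cscale (c + d) A = cscale c A + cscale d A" by (simp add: vec_eq_iff algebra_simps)
lemma cscale_add_right: "cscale c (A + B) = cscale c A + cscale c B" by (simp add: vec_eq_iff algebra_simps)
lemma cscale_diff_right: "cscale c (A - B) = cscale c A - cscale c B" by (simp add: vec_eq_iff algebra_simps)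
lemma cscale_sum_right: "cscale c (sum f S) = sum (\<lambda>x. cscale c (f x)) S"
  by (induction S rule: infinite_finite_induct) (simp_all add: cscale_add_right)
lemma cscale_sum_left: "cscale (sum f S) A = sum (\<lambda>x. cscale (f x) A) S"
  by (induction S rule: infinite_finite_induct) (simp_all add: cscale_add_left)

lemma matpow_cscale: "matpow (cscale z A) n = cscale (z ^ n) (matpow A n)"
  by (induction n) (simp_all add: matpow_Suc cscale_mmul_left cscale_mmul_right cscale_mult mult.commute)

lemma norm_cvec_scale: "norm (\<chi> j. c * (v::complex^'n) $ j) = cmod c * norm v"
  by (simp add: norm_vec_def norm_mult L2_set_right_distrib)

lemma norm_cscale: "norm (cscale c (A::complex^'n^'m)) = cmod c * norm A"
proof -
  have "norm (cscale c A) = L2_set (\<lambda>i. norm (\<chi> j. c * A $ i $ j)) UNIV"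
    by (simp add: norm_vec_def cscale_def)
  also have "\<dots> = L2_set (\<lambda>i. cmod c * norm (A $ i)) UNIV"
  proof -
    have "\<And>i. norm (\<chi> j. c * A $ i $ j) = cmod c * norm (A $ i)" by (rule norm_cvec_scale)
    then show ?thesis by (simp only:)
  qed
  also have "\<dots> = cmod c * norm A" by (simp add: norm_vec_def L2_set_right_distrib)
  finally show ?thesis .
qed

lemma det_cscale: "det (cscale c (A::complex^'n^'n)) = c ^ CARD('n) * det A"
  by (simp add: det_def sum_distrib_left prod.distrib mult_ac)

lemma mspec_closed: "closed (mspec (A::complex^'n^'n))"
proof -
  have "continuous_on UNIV (\<lambda>z. det (mat z - A))"
  proof (rule cont_det)
    fix i j
    have "(\<lambda>z. (mat z - A) $ i $ j) = (\<lambda>z. (if i = j then 1 else 0) * z - A $ i $ j)"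
      by (auto simp: mat_def fun_eq_iff)
    then show "continuous_on UNIV (\<lambda>z. (mat z - A) $ i $ j)"
      by (simp only:) (intro continuous_intros)
  qed
  then have "closed {z. det (mat z - A) = 0}"
    by (intro closed_Collect_eq continuous_intros) auto
  then show ?thesis by (simp add: mspec_def)
qed

lemma mspec_bound:
  assumes "mspec (A::complex^'n^'n) \<subseteq> ball 0 r" "r > 0"
  obtains r1 where "0 < r1" "r1 < r" "\<And>z. z \<in> mspec A \<Longrightarrow> cmod z \<le> r1"
proof (cases "mspec A = {}")
  case True then show ?thesis using that[of "r/2"] assms by auto
next
  case False
  have "compact (mspec A)"
    using mspec_closed assms(1) bounded_ball bounded_subset compact_eq_bounded_closed by blast
  then obtain x where x: "x \<in> mspec A" "\<And>y. y \<in> mspec A \<Longrightarrow> cmod y \<le> cmod x"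
    using continuous_attains_sup[of "mspec A" cmod] False by (auto intro: continuous_intros)
  have "cmod x < r" using x(1) assms(1) by auto
  show ?thesis
  proof (rule that[of "max (cmod x) (r/2)"])
    show "0 < max (cmod x) (r/2)" using assms by auto
    show "max (cmod x) (r/2) < r" using \<open>cmod x < r\<close> assms by auto
    fix z assume "z \<in> mspec A" then show "cmod z \<le> max (cmod x) (r/2)"
      using x(2) by (meson max.coboundedI1)
  qed
qed

lemma det_resolvent_nz:
  assumes "\<And>w. w \<in> mspec (A::complex^'n^'n) \<Longrightarrow> cmod w \<le> r1" "0 < r1" "cmod z < 1 / r1"
  shows "det (mat 1 - cscale z A) \<noteq> 0"
proof (cases "z = 0")
  case True then show ?thesis by simp
next
  case False
  have eq: "mat 1 - cscale z A = cscale z (mat (1/z) - A)"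
    using False by (simp add: vec_eq_iff mat_def algebra_simps)
  have "cmod (1/z) > r1"
    using assms(2,3) False by (simp add: norm_divide field_simps)
  then have "1/z \<notin> mspec A" using assms(1) by force
  then have "det (mat (1/z) - A) \<noteq> 0" by (simp add: mspec_def)
  then show ?thesis using False by (simp add: eq det_cscale)
qed

lemma cramer_inv:
  fixes M :: "complex^'n^'n"
  assumes "det M \<noteq> 0"
  shows "matrix_inv M $ a $ b = det (\<chi> i j. if j = a then axis b 1 $ i else M $ i $ j) / det M"
proof -
  have inv: "invertible M" using assms invertible_det_nz by blast
  let ?x = "matrix_inv M *v axis b 1"
  have "M *v ?x = axis b 1"
    using minv[OF inv] by (simp add: matrix_vector_mul_assoc)
  then have "?x = (\<chi> k. det (\<chi> i j. if j = k then axis b 1 $ i else M $ i $ j) / det M)"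
    using cramer[OF assms] by blast
  then have "?x $ a = det (\<chi> i j. if j = a then axis b 1 $ i else M $ i $ j) / det M" by simp
  then show ?thesis by (simp add: mvec_axis_entry)
qed

lemma neumann:
  fixes x :: "'a::{real_normed_algebra_1,banach}"
  assumes "norm x < 1"
  shows "summable (\<lambda>n. x ^ n)" "(1 - x) * (\<Sum>n. x ^ n) = 1" "(\<Sum>n. x ^ n) * (1 - x) = 1"
proof -
  show sm: "summable (\<lambda>n. x ^ n)"
    by (rule summable_comparison_test[OF _ summable_geometric[of "norm x"]])
       (use assms in \<open>auto intro!: norm_power_ineq\<close>)
  have lim: "(\<lambda>n. x ^ n) \<longlonglongrightarrow> 0"
    by (rule Lim_null_comparison[where g="\<lambda>n. norm x ^ n"])
       (use assms in \<open>auto intro!: always_eventually allI norm_power_ineq LIMSEQ_power_zero\<close>)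
  have tel: "(\<lambda>n. x ^ n - x ^ Suc n) sums 1"
    using telescope_sums'[OF lim] by simp
  have "(1 - x) * (\<Sum>n. x ^ n) = (\<Sum>n. (1 - x) * x ^ n)"
    by (rule suminf_mult[OF sm, symmetric])
  also have "\<dots> = (\<Sum>n. x ^ n - x ^ Suc n)" by (simp add: algebra_simps)
  also have "\<dots> = 1" using tel sums_unique by metis
  finally show "(1 - x) * (\<Sum>n. x ^ n) = 1" .
  have "(\<Sum>n. x ^ n) * (1 - x) = (\<Sum>n. x ^ n * (1 - x))"
    by (rule suminf_mult2[OF sm])
  also have "\<dots> = (\<Sum>n. x ^ n - x ^ Suc n)" by (simp add: algebra_simps power_commutes)
  also have "\<dots> = 1" using tel sums_unique by metis
  finally show "(\<Sum>n. x ^ n) * (1 - x) = 1" .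
qed

lemma norm_mabs_cscale: "norm (mabs (cscale z A)) \<le> cmod z * norm (mabs A)"
proof -
  have "norm (mabs (cscale z A)) = onorm (\<lambda>v. cscale z A *v v)" by (simp add: norm_sqm_def')
  also have "\<dots> \<le> cmod z * onorm (\<lambda>v. A *v v)"
  proof (rule onorm_bound)
    show "0 \<le> cmod z * onorm ((*v) A)" by (simp add: onorm_pos_le bl_mvec)
    fix v
    have "cscale z A *v v = (\<chi> i. z * (A *v v) $ i)"
      by (simp add: vec_eq_iff matrix_vector_mult_def sum_distrib_left mult.assoc)
    then have "norm (cscale z A *v v) = cmod z * norm (A *v v)" by (simp add: norm_cvec_scale)
    also have "\<dots> \<le> cmod z * (onorm ((*v) A) * norm v)"
      by (intro mult_left_mono onorm bl_mvec) simp_all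
    finally show "norm (cscale z A *v v) \<le> cmod z * onorm ((*v) A) * norm v" by simp
  qed
  finally show ?thesis by (simp add: norm_sqm_def')
qed

lemma bl_entry: "bounded_linear (\<lambda>x::'n::finite sqm. mrep x $ a $ b)"
  by (intro bounded_linear_compose[OF bounded_linear_vec_nth] bounded_linear_compose[OF bounded_linear_vec_nth] bl_mrep)

lemma resolvent_series:
  fixes A :: "complex^'n^'n"
  assumes "cmod z < 1 / (norm (mabs A) + 1)"
  shows "(\<lambda>n. matpow A n $ a $ b * z ^ n) sums (matrix_inv (mat 1 - cscale z A) $ a $ b)"
proof -
  let ?x = "mabs (cscale z A)"
  have pos: "norm (mabs A) + 1 > 0" by (smt (verit) norm_ge_zero)
  have "cmod z * (norm (mabs A) + 1) < 1"
    by (metis pos_less_divide_eq[OF pos] assms)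
  then have "cmod z * norm (mabs A) < 1"
    by (smt (verit) mult_left_mono norm_ge_zero)
  then have nx: "norm ?x < 1" using norm_mabs_cscale[of z A] by linarith
  note N = neumann[OF nx]
  have "mrep (1 - ?x) ** mrep (\<Sum>n. ?x ^ n) = mat 1" using N(2) by (metis mrep_mult mrep_one)
  moreover have "mrep (\<Sum>n. ?x ^ n) ** mrep (1 - ?x) = mat 1" using N(3) by (metis mrep_mult mrep_one)
  ultimately have "matrix_inv (mat 1 - cscale z A) = mrep (\<Sum>n. ?x ^ n)"
    by (intro minv_unique) simp_all
  also have "\<dots> $ a $ b = (\<Sum>n. mrep (?x ^ n) $ a $ b)"
    by (rule bounded_linear.suminf[OF bl_entry N(1)])
  also have "\<dots> = (\<Sum>n. matpow A n $ a $ b * z ^ n)"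
    by (simp add: mrep_power matpow_cscale mult.commute)
  finally have eq: "matrix_inv (mat 1 - cscale z A) $ a $ b = (\<Sum>n. matpow A n $ a $ b * z ^ n)" .
  have "summable (\<lambda>n. mrep (?x ^ n) $ a $ b)"
    by (rule bounded_linear.summable[OF bl_entry N(1)])
  then have "summable (\<lambda>n. matpow A n $ a $ b * z ^ n)"
    by (simp add: mrep_power matpow_cscale mult.commute)
  then show ?thesis using eq by (simp add: summable_sums)
qed

lemma powbound:
  fixes A :: "complex^'n^'n"
  assumes "mspec A \<subseteq> ball 0 r" "r > 0"
  shows "\<exists>s C. 0 < s \<and> s < r \<and> (\<forall>n. norm (matpow A n) \<le> C * s ^ n)"
proof -
  obtain r1 where r1: "0 < r1" "r1 < r" "\<And>z. z \<in> mspec A \<Longrightarrow> cmod z \<le> r1"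
    using mspec_bound[OF assms] by blast
  define s where "s = (r1 + r) / 2"
  have s: "r1 < s" "s < r" "0 < s" using r1 by (auto simp: s_def)
  define \<delta> where "\<delta> = 1 / (norm (mabs A) + 1)"
  have pos: "norm (mabs A) + 1 > 0" by (smt (verit) norm_ge_zero)
  have \<delta>: "\<delta> > 0" using pos by (simp add: \<delta>_def)
  have entry: "\<exists>C. \<forall>n. cmod (matpow A n $ a $ b) \<le> C * s ^ n" for a b
  proof -
    define g where "g z = matrix_inv (mat 1 - cscale z A) $ a $ b" for z
    define F where "F = Abs_fps (\<lambda>n. matpow A n $ a $ b)"
    have ser: "(\<lambda>n. matpow A n $ a $ b * z ^ n) sums g z" if "cmod z < \<delta>" for z
      using resolvent_series[of z A a b] that by (simp add: g_def \<delta>_def)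
    have "summable (\<lambda>n. fps_nth F n * (of_real (\<delta>/2)) ^ n)"
      using ser[of "of_real (\<delta>/2)"] \<delta> by (simp add: F_def sums_summable)
    then have "conv_radius (fps_nth F) \<ge> norm (of_real (\<delta>/2) :: complex)"
      by (rule conv_radius_geI)
    then have cr: "fps_conv_radius F > 0"
      using \<delta> unfolding fps_conv_radius_def by (simp add: less_le_trans[rotated])
    have ev: "eventually (\<lambda>z. eval_fps F z = g z) (nhds 0)"
    proof -
      have "eventually (\<lambda>z. z \<in> ball 0 \<delta>) (nhds (0::complex))"
        using \<delta> by (intro eventually_nhds_in_open) auto
      then show ?thesis
        by eventually_elim (use ser in \<open>auto simp: eval_fps_def F_def sums_iff\<close>)
    qed
    have fpsexp: "g has_fps_expansion F" using cr ev by (simp add: has_fps_expansion_def)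
    have coef: "matpow A n $ a $ b = (deriv ^^ n) g 0 / fact n" for n
      using fps_nth_fps_expansion[OF fpsexp, of n] by (simp add: F_def)
    have holo: "g holomorphic_on ball 0 (1 / r1)"
    proof -
      have "(\<lambda>z. det (\<chi> i j. if j = a then axis b 1 $ i else (mat 1 - cscale z A) $ i $ j) /
                det (mat 1 - cscale z A)) holomorphic_on ball 0 (1 / r1)"
      proof (rule holomorphic_on_divide)
        have "\<And>i j. (\<lambda>z. if j = a then axis b 1 $ i else (mat 1 - cscale z A) $ i $ j) holomorphic_on ball 0 (1 / r1)"
          subgoal for i j by (cases "j = a") (auto simp: mat_def intro!: holomorphic_intros) done
        then show "(\<lambda>z. det (\<chi> i j. if j = a then axis b 1 $ i else (mat 1 - cscale z A) $ i $ j)) holomorphic_on ball 0 (1 / r1)"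
          by (rule holo_det_lambda)
        show "(\<lambda>z. det (mat 1 - cscale z A)) holomorphic_on ball 0 (1 / r1)"
          by (rule holo_det) (auto simp: mat_def intro!: holomorphic_intros)
      next
        fix z :: complex assume "z \<in> ball 0 (1 / r1)"
        then show "det (mat 1 - cscale z A) \<noteq> 0"
          by (intro det_resolvent_nz[OF r1(3) r1(1)]) auto
      qed
      then show ?thesis
        by (rule holomorphic_cong[THEN iffD1, rotated 2])
           (auto simp: g_def cramer_inv det_resolvent_nz[OF r1(3) r1(1)])
    qed
    have w: "of_real (1/s) \<in> ball (0::complex) (1 / r1)"
    proof -
      have "cmod (complex_of_real (1/s)) = 1/s" using s by (simp add: norm_divide)
      moreover have "1/s < 1/r1" using s r1 by (simp add: field_simps)
      ultimately show ?thesis by simp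
    qed
    have "(\<lambda>n. (deriv ^^ n) g 0 / fact n * (of_real (1/s) - 0) ^ n) sums g (of_real (1/s))"
      by (rule holomorphic_power_series[OF holo w])
    then have "summable (\<lambda>n. matpow A n $ a $ b * of_real (1/s) ^ n)"
      by (simp add: coef sums_summable)
    then have "(\<lambda>n. matpow A n $ a $ b * of_real (1/s) ^ n) \<longlonglongrightarrow> 0"
      by (rule summable_LIMSEQ_zero)
    then have "Bseq (\<lambda>n. matpow A n $ a $ b * of_real (1/s) ^ n)"
      using convergent_imp_Bseq convergent_def by blast
    then obtain K where K: "K > 0" "\<And>n. norm (matpow A n $ a $ b * of_real (1/s) ^ n) \<le> K"
      by (auto elim: BseqE)
    have "cmod (matpow A n $ a $ b) \<le> K * s ^ n" for n
    proof -
      have "cmod (matpow A n $ a $ b) * (1/s) ^ n \<le> K"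
        using K(2)[of n] s by (simp add: norm_mult norm_power norm_divide abs_of_pos)
      then show ?thesis using s by (simp add: field_simps)
    qed
    then show ?thesis by blast
  qed
  then obtain Cf where Cf: "\<And>a b n. cmod (matpow A n $ a $ b) \<le> Cf a b * s ^ n" by metis
  have "norm (matpow A n) \<le> (\<Sum>a\<in>UNIV. \<Sum>b\<in>UNIV. Cf a b) * s ^ n" for n
  proof -
    have "norm (matpow A n) \<le> (\<Sum>a\<in>UNIV. \<Sum>b\<in>UNIV. cmod (matpow A n $ a $ b))" by (rule vec_le_entries)
    also have "\<dots> \<le> (\<Sum>a\<in>UNIV. \<Sum>b\<in>UNIV. Cf a b * s ^ n)" by (intro sum_mono Cf)
    also have "\<dots> = (\<Sum>a\<in>UNIV. \<Sum>b\<in>UNIV. Cf a b) * s ^ n" by (simp add: sum_distrib_right)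
    finally show ?thesis .
  qed
  then show ?thesis using s by blast
qed



lemma mmul_add_rdistrib: "((A::complex^'n^'m) + B) ** C = A ** C + B ** C"
  by (simp add: vec_eq_iff matrix_matrix_mult_def sum.distrib distrib_right)

lemma bb_mmul: "bounded_bilinear (\<lambda>(A::complex^'n^'m) (B::complex^'p^'n). A ** B)"
  unfolding bilinear_conv_bounded_bilinear[symmetric] bilinear_def
  by (auto intro!: linearI simp: matrix_add_ldistrib mmul_add_rdistrib scaleR_mmul_left scaleR_mmul_right)

lemma mabs_scaleR: "mabs (r *\<^sub>R A) = r *\<^sub>R mabs A" by (metis mrep_scaleR mabs_mrep mrep_mabs)

lemma mexp_scaleR: "mexp (t *\<^sub>R \<Lambda>) = mrep (exp (t *\<^sub>R mabs \<Lambda>))"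
  by (simp add: mexp_eq mabs_scaleR)

lemma mexp_zero0[simp]: "mexp (0::complex^'p^'p) = mat 1"
proof -
  have "mexp (0 *\<^sub>R (0::complex^'p^'p)) = mrep (exp (0 *\<^sub>R mabs 0))" by (rule mexp_scaleR)
  then show ?thesis by simp
qed

lemma mexp_zero: "mexp (0 *\<^sub>R \<Lambda>) = mat 1"
  by simp

lemma mmul_uminus_right[simp]: "(A::complex^'n^'m) ** (- B) = - (A ** B)"
  by (simp add: vec_eq_iff matrix_matrix_mult_def sum_negf)

lemma mmul_uminus_left[simp]: "(- (A::complex^'n^'m)) ** B = - (A ** B)"
  by (simp add: vec_eq_iff matrix_matrix_mult_def sum_negf)

lemma column_mvec: "column k M = (M::complex^'p^'n) *v axis k 1"
  by (simp add: vec_eq_iff column_def mvec_axis_entry)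

lemma bl_sandwich: "bounded_linear (\<lambda>M::complex^'p^'p. ((Y::complex^'p^'n) ** M ** (P::complex^'q^'p)) *v (e::complex^'q))"
  unfolding linear_conv_bounded_linear[symmetric]
  by (rule linearI) (simp_all add: matrix_add_ldistrib mmul_add_rdistrib add_mvec scaleR_mmul_left scaleR_mmul_right scaleR_mvec)

lemma col_deriv:
  "((\<lambda>t. ((Y::complex^'p^'n) ** mexp (t *\<^sub>R \<Lambda>) ** P) *v e) has_vector_derivative
     (Y ** mexp (t *\<^sub>R \<Lambda>) ** (\<Lambda> ** P)) *v e) (at t within S)"
proof -
  have "((\<lambda>t. (\<lambda>x. (Y ** mrep x ** P) *v e) (exp (t *\<^sub>R mabs \<Lambda>))) has_vector_derivative
          (\<lambda>x. (Y ** mrep x ** P) *v e) (exp (t *\<^sub>R mabs \<Lambda>) * mabs \<Lambda>)) (at t within S)"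
    by (rule bounded_linear.has_vector_derivative[OF bounded_linear_compose[OF bl_sandwich bl_mrep]
          exp_scaleR_has_vector_derivative_right])
  then show ?thesis by (simp add: mexp_scaleR matrix_mul_assoc)
qed

lemma vderiv_col:
  "(vderiv ^^ n) (\<lambda>t. ((Y::complex^'p^'n) ** mexp (t *\<^sub>R \<Lambda>)) *v e) = (\<lambda>t. (Y ** mexp (t *\<^sub>R \<Lambda>) ** matpow \<Lambda> n) *v e)"
proof (induction n)
  case 0 then show ?case by simp
next
  case (Suc n)
  have "(vderiv ^^ Suc n) (\<lambda>t. (Y ** mexp (t *\<^sub>R \<Lambda>)) *v e) = vderiv (\<lambda>t. (Y ** mexp (t *\<^sub>R \<Lambda>) ** matpow \<Lambda> n) *v e)"
    using Suc by simp
  also have "\<dots> = (\<lambda>t. (Y ** mexp (t *\<^sub>R \<Lambda>) ** (\<Lambda> ** matpow \<Lambda> n)) *v e)"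
    unfolding vderiv_def by (rule ext, rule vector_derivative_at, rule col_deriv)
  finally show ?case by (simp add: matpow_Suc)
qed

lemma C_inf_col: "C_inf (\<lambda>t. ((Y::complex^'p^'n) ** mexp (t *\<^sub>R \<Lambda>)) *v e)"
  unfolding C_inf_def vderiv_col matpow_Suc by (intro allI col_deriv)

lemma vderiv_col0: "(vderiv ^^ n) (\<lambda>t. ((Y::complex^'p^'n) ** mexp (t *\<^sub>R \<Lambda>)) *v e) 0 = (Y ** matpow \<Lambda> n) *v e"
  unfolding vderiv_col by (simp only: mexp_zero) simp

lemma int0_col:
  fixes Y :: "complex^'p^'n" and \<Lambda> :: "complex^'p^'p"
  assumes "invertible \<Lambda>"
  shows "int0 (\<lambda>t. (Y ** mexp (t *\<^sub>R \<Lambda>)) *v e) \<theta> =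
         (Y ** mexp (\<theta> *\<^sub>R \<Lambda>) ** matrix_inv \<Lambda>) *v e - (Y ** matrix_inv \<Lambda>) *v e"
proof -
  let ?f = "\<lambda>t. (Y ** mexp (t *\<^sub>R \<Lambda>)) *v e"
  let ?G = "\<lambda>t. (Y ** mexp (t *\<^sub>R \<Lambda>) ** matrix_inv \<Lambda>) *v e"
  have d: "(?G has_vector_derivative ?f t) (at t within S)" for t S
    using col_deriv[of Y \<Lambda> "matrix_inv \<Lambda>" e t S] minv[OF assms] by simp
  have G0: "?G 0 = (Y ** matrix_inv \<Lambda>) *v e" by (simp only: mexp_zero) simp
  show ?thesis
  proof (cases "0 \<le> \<theta>")
    case True
    have "(?f has_integral (?G \<theta> - ?G 0)) {0..\<theta>}"
      by (rule fundamental_theorem_of_calculus[OF True]) (rule d)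
    then show ?thesis using True G0 by (simp add: int0_def integral_unique)
  next
    case False
    then have "\<theta> \<le> 0" by simp
    have "(?f has_integral (?G 0 - ?G \<theta>)) {\<theta>..0}"
      by (rule fundamental_theorem_of_calculus[OF \<open>\<theta> \<le> 0\<close>]) (rule d)
    then show ?thesis using False G0 by (simp add: int0_def integral_unique)
  qed
qed

lemma int0_deriv:
  fixes \<phi> :: "real \<Rightarrow> complex^'n"
  assumes "continuous_on UNIV \<phi>"
  shows "(int0 \<phi> has_vector_derivative \<phi> x) (at x)"
proof -
  define a where "a = - \<bar>x\<bar> - 1"
  define b where "b = \<bar>x\<bar> + 1"
  have ab: "a < 0" "0 < b" "a < x" "x < b" by (auto simp: a_def b_def)
  have cont: "continuous_on {a..b} \<phi>" using assms continuous_on_subset by blast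
  have "((\<lambda>u. integral {a..u} \<phi>) has_vector_derivative \<phi> x) (at x within {a..b})"
    by (rule integral_has_vector_derivative[OF cont]) (use ab in auto)
  then have "((\<lambda>u. integral {a..u} \<phi>) has_vector_derivative \<phi> x) (at x within {a<..<b})"
    by (rule has_vector_derivative_within_subset) auto
  then have d: "((\<lambda>u. integral {a..u} \<phi> - integral {a..0} \<phi>) has_vector_derivative \<phi> x) (at x)"
    using ab by (subst (asm) at_within_open) (auto intro: derivative_eq_intros)
  show ?thesis
  proof (rule has_vector_derivative_transform_within_open[OF d, of "{a<..<b}"])
    show "open {a<..<b}" "x \<in> {a<..<b}" using ab by auto
    fix y assume y: "y \<in> {a<..<b}"
    have int: "\<phi> integrable_on {a..b}" by (rule integrable_continuous_interval[OF cont])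
    show "integral {a..y} \<phi> - integral {a..0} \<phi> = int0 \<phi> y"
    proof (cases "0 \<le> y")
      case True
      have "integral {a..0} \<phi> + integral {0..y} \<phi> = integral {a..y} \<phi>"
        by (rule Henstock_Kurzweil_Integration.integral_combine) (use True ab y in \<open>auto intro: integrable_on_subinterval[OF int]\<close>)
      then show ?thesis using True by (simp add: int0_def algebra_simps)
    next
      case False
      have "integral {a..y} \<phi> + integral {y..0} \<phi> = integral {a..0} \<phi>"
        by (rule Henstock_Kurzweil_Integration.integral_combine) (use False ab y in \<open>auto intro: integrable_on_subinterval[OF int]\<close>)
      then show ?thesis using False by (simp add: int0_def algebra_simps)
    qed
  qed
qed

lemma ode_unique:
  fixes \<Psi> :: "real \<Rightarrow> complex^'p^'n" and \<Lambda> :: "complex^'p^'p"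
  assumes d: "\<And>t. (\<Psi> has_vector_derivative (\<Psi> t ** \<Lambda>)) (at t)"
  shows "\<Psi> t = \<Psi> 0 ** mexp (t *\<^sub>R \<Lambda>)"
proof -
  define X where "X = mabs \<Lambda>"
  define E' where "E' t = mrep (exp (t *\<^sub>R (- X)))" for t
  define \<Phi> where "\<Phi> t = \<Psi> t ** E' t" for t
  have dE: "(E' has_vector_derivative (- \<Lambda>) ** E' t) (at t)" for t
  proof -
    have "((\<lambda>t. mrep (exp (t *\<^sub>R (- X)))) has_vector_derivative mrep ((- X) * exp (t *\<^sub>R (- X)))) (at t)"
      by (rule bounded_linear.has_vector_derivative[OF bl_mrep exp_scaleR_has_vector_derivative_left])
    then show ?thesis by (simp add: E'_def[abs_def] X_def)
  qed
  have dP: "(\<Phi> has_vector_derivative 0) (at t)" for t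
  proof -
    have "(\<Phi> has_vector_derivative (\<Psi> t ** ((- \<Lambda>) ** E' t) + (\<Psi> t ** \<Lambda>) ** E' t)) (at t)"
      unfolding \<Phi>_def[abs_def] by (rule bounded_bilinear.has_vector_derivative[OF bb_mmul d dE])
    moreover have "\<Psi> t ** ((- \<Lambda>) ** E' t) + (\<Psi> t ** \<Lambda>) ** E' t = 0"
      by (simp add: matrix_mul_assoc)
    ultimately show ?thesis by simp
  qed
  have "\<exists>c. \<forall>x\<in>UNIV. \<Phi> x = c"
    by (rule has_derivative_zero_constant) (use dP in \<open>auto simp: has_vector_derivative_def\<close>)
  then have const: "\<Phi> t = \<Phi> 0" by auto
  have "\<Phi> 0 = \<Psi> 0" by (simp add: \<Phi>_def E'_def)
  have inv: "E' t ** mrep (exp (t *\<^sub>R X)) = mat 1"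
  proof -
    have "exp (t *\<^sub>R (- X)) * exp (- (t *\<^sub>R (- X))) = 1" by (rule exp_minus_inverse)
    then have "exp (t *\<^sub>R (- X)) * exp (t *\<^sub>R X) = 1" by simp
    then show ?thesis unfolding E'_def by (metis mrep_mult mrep_one)
  qed
  have "\<Psi> t = \<Psi> t ** (E' t ** mrep (exp (t *\<^sub>R X)))" using inv by simp
  also have "\<dots> = \<Phi> t ** mrep (exp (t *\<^sub>R X))" by (simp add: \<Phi>_def matrix_mul_assoc)
  also have "\<dots> = \<Psi> 0 ** mexp (t *\<^sub>R \<Lambda>)"
    using const \<open>\<Phi> 0 = \<Psi> 0\<close> by (simp add: mexp_scaleR X_def)
  finally show ?thesis .
qed



lemma higher_deriv_sum:
  fixes f :: "'a \<Rightarrow> complex \<Rightarrow> complex"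
  assumes "finite J" "\<And>j. j \<in> J \<Longrightarrow> f j holomorphic_on S" "open S" "z \<in> S"
  shows "(deriv ^^ n) (\<lambda>w. \<Sum>j\<in>J. f j w) z = (\<Sum>j\<in>J. (deriv ^^ n) (f j) z)"
  using assms(1,2)
proof (induction J rule: finite_induct)
  case empty then show ?case by simp
next
  case (insert a J)
  have "(deriv ^^ n) (\<lambda>w. \<Sum>j\<in>insert a J. f j w) z = (deriv ^^ n) (\<lambda>w. f a w + (\<Sum>j\<in>J. f j w)) z"
    using insert by simp
  also have "\<dots> = (deriv ^^ n) (f a) z + (deriv ^^ n) (\<lambda>w. \<Sum>j\<in>J. f j w) z"
    by (rule higher_deriv_add) (use insert assms(3,4) in \<open>auto intro!: holomorphic_intros\<close>)
  also have "\<dots> = (\<Sum>j\<in>insert a J. (deriv ^^ n) (f j) z)"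
    using insert by simp
  finally show ?case .
qed

lemma mmul_sum_right: "(A::complex^'n^'m) ** sum f S = sum (\<lambda>x. A ** f x) S"
  by (induction S rule: infinite_finite_induct) (simp_all add: matrix_add_ldistrib)

lemma mmul_sum_left: "sum f S ** (A::complex^'p^'n) = sum (\<lambda>x. f x ** A) S"
  by (induction S rule: infinite_finite_induct) (simp_all add: mmul_add_rdistrib)

lemma mmul_diff_right: "(A::complex^'n^'m) ** (B - C) = A ** B - A ** C"
  by (simp add: vec_eq_iff matrix_matrix_mult_def sum_subtractf right_diff_distrib)

definition Mcoef :: "(nat \<Rightarrow> complex \<Rightarrow> complex) \<Rightarrow> (nat \<Rightarrow> complex^'n^'n) \<Rightarrow> nat \<Rightarrow> nat \<Rightarrow> complex^'n^'n" where
  "Mcoef fs Ms m k = (\<Sum>j<m. cscale ((deriv ^^ k) (fs j) 0 / fact k) (Ms j))"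

lemma Mcoef_0:
  assumes "r > 0" "\<And>z. z \<in> ball 0 r \<Longrightarrow> (M::complex \<Rightarrow> complex^'n^'n) z = (\<Sum>j<m. cscale (fs j z) (Ms j))"
  shows "Mcoef fs Ms m 0 = M 0"
  using assms by (simp add: Mcoef_def)

lemma Bcoef_eq:
  fixes r :: real and M :: "complex \<Rightarrow> complex^'n^'n" and m :: nat
    and Ms :: "nat \<Rightarrow> complex^'n^'n" and fs :: "nat \<Rightarrow> complex \<Rightarrow> complex"
    and B :: "complex \<Rightarrow> complex^'n^'n"
  assumes r_pos: "r > 0"
    and fs_hol: "\<And>j. j < m \<Longrightarrow> fs j holomorphic_on ball 0 r"
    and M_eq: "\<And>z. z \<in> ball 0 r \<Longrightarrow> M z = (\<Sum>j<m. cscale (fs j z) (Ms j))"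
    and B_eq: "\<And>z. z \<in> ball 0 r \<Longrightarrow> z \<noteq> 0 \<Longrightarrow>
                  B z = cscale (1 / z) (matrix_inv (M 0) ** (M 0 - M z))"
    and B_hol: "\<And>a b. (\<lambda>z. B z $ a $ b) holomorphic_on ball 0 r"
  shows "cscale (1 / fact i) (Bcoef B i) = - (matrix_inv (M 0) ** Mcoef fs Ms m (Suc i))"
proof -
  let ?Minv = "matrix_inv (M 0)"
  have ent: "(cscale (1 / fact i) (Bcoef B i)) $ a $ b = (- (?Minv ** Mcoef fs Ms m (Suc i))) $ a $ b" for a b
  proof -
    define h where "h z = B z $ a $ b" for z
    define K where "K j = (?Minv ** Ms j) $ a $ b" for j
    define c0 where "c0 = (?Minv ** M 0) $ a $ b"
    define g where "g w = c0 - (\<Sum>j<m. K j * fs j w)" for w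
    have MinvM: "(?Minv ** M z) $ a $ b = (\<Sum>j<m. fs j z * K j)" if "z \<in> ball 0 r" for z
      using that by (simp add: M_eq mmul_sum_right cscale_mmul_right K_def)
    have eq: "w * h w = g w" if "w \<in> ball 0 r" for w
    proof (cases "w = 0")
      case True
      then show ?thesis using MinvM[of 0] r_pos by (simp add: g_def c0_def mult.commute)
    next
      case False
      have "w * h w = (?Minv ** (M 0 - M w)) $ a $ b"
        using B_eq[OF that False] False by (simp add: h_def)
      also have "\<dots> = c0 - (?Minv ** M w) $ a $ b"
        by (simp add: c0_def mmul_diff_right)
      finally show ?thesis using MinvM[OF that] by (simp add: g_def mult.commute)
    qed
    have hh: "h holomorphic_on ball 0 r" using B_hol by (simp add: h_def[abs_def])
    have gh: "g holomorphic_on ball 0 r"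
      unfolding g_def[abs_def] by (intro holomorphic_intros) (auto intro: fs_hol)
    have 0: "0 \<in> ball (0::complex) r" using r_pos by simp
    have "(deriv ^^ Suc i) (\<lambda>w. w * h w) 0 = (deriv ^^ Suc i) g 0"
      by (rule higher_deriv_transform_within_open[OF _ gh _ 0 eq]) (auto intro!: holomorphic_intros hh)
    also have "(deriv ^^ Suc i) (\<lambda>w. w * h w) 0 =
               (\<Sum>l = 0..Suc i. of_nat (Suc i choose l) * (deriv ^^ l) (\<lambda>w. w) 0 * (deriv ^^ (Suc i - l)) h 0)"
      by (rule higher_deriv_mult[OF _ hh _ 0]) (auto intro: holomorphic_intros)
    also have "\<dots> = (\<Sum>l = 0..Suc i. if l = 1 then of_nat (Suc i) * (deriv ^^ i) h 0 else 0)"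
      by (rule sum.cong) auto
    also have "\<dots> = of_nat (Suc i) * (deriv ^^ i) h 0" by simp
    finally have lhs: "of_nat (Suc i) * (deriv ^^ i) h 0 = (deriv ^^ Suc i) g 0" .
    have "(deriv ^^ Suc i) g 0 = (deriv ^^ Suc i) (\<lambda>w. c0) 0 - (deriv ^^ Suc i) (\<lambda>w. \<Sum>j<m. K j * fs j w) 0"
      unfolding g_def by (rule higher_deriv_diff[where S="ball 0 r"]) (use r_pos in \<open>auto intro!: holomorphic_intros fs_hol 0\<close>)
    also have "(deriv ^^ Suc i) (\<lambda>w. \<Sum>j<m. K j * fs j w) 0 = (\<Sum>j<m. (deriv ^^ Suc i) (\<lambda>w. K j * fs j w) 0)"
      by (rule higher_deriv_sum[where S="ball 0 r"]) (use r_pos in \<open>auto intro!: holomorphic_intros fs_hol 0\<close>)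
    also have "\<dots> = (\<Sum>j<m. K j * (deriv ^^ Suc i) (fs j) 0)"
      by (intro sum.cong refl higher_deriv_cmult[where A="ball 0 r"]) (use r_pos in \<open>auto intro: fs_hol\<close>)
    finally have rhs: "(deriv ^^ Suc i) g 0 = - (\<Sum>j<m. K j * (deriv ^^ Suc i) (fs j) 0)" by simp
    have "(cscale (1 / fact i) (Bcoef B i)) $ a $ b = (deriv ^^ i) h 0 / fact i"
      by (simp add: Bcoef_def h_def[abs_def])
    also have "\<dots> = (of_nat (Suc i) * (deriv ^^ i) h 0) / (of_nat (Suc i) * fact i)"
      by (simp del: of_nat_Suc)
    also have "\<dots> = - (\<Sum>j<m. K j * (deriv ^^ Suc i) (fs j) 0) / (of_nat (Suc i) * fact i)"
      by (simp only: lhs rhs)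
    also have "\<dots> = (- (?Minv ** Mcoef fs Ms m (Suc i))) $ a $ b"
      by (simp add: Mcoef_def mmul_sum_right cscale_mmul_right K_def sum_divide_distrib
                    sum_negf field_simps)
    finally show ?thesis .
  qed
  then show ?thesis by (simp add: vec_eq_iff)
qed



lemma norm_mmul_le:
  "norm ((A::complex^'n^'m) ** (B::complex^'p^'n)) \<le> real (CARD('m) * CARD('p) * CARD('n)) * norm A * norm B"
proof -
  have e: "cmod ((A ** B) $ i $ j) \<le> real CARD('n) * (norm A * norm B)" for i j
  proof -
    have "cmod ((A ** B) $ i $ j) = cmod (\<Sum>k\<in>UNIV. A $ i $ k * B $ k $ j)" by (simp add: matrix_matrix_mult_def)
    also have "\<dots> \<le> (\<Sum>k\<in>UNIV. cmod (A $ i $ k) * cmod (B $ k $ j))"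
      by (rule order_trans[OF norm_sum]) (simp add: norm_mult)
    also have "\<dots> \<le> (\<Sum>k\<in>(UNIV::'n set). norm A * norm B)"
      by (intro sum_mono mult_mono entry_le_vec) simp_all
    also have "\<dots> = real CARD('n) * (norm A * norm B)" by simp
    finally show ?thesis .
  qed
  have "norm (A ** B) \<le> (\<Sum>i\<in>UNIV. \<Sum>j\<in>UNIV. cmod ((A ** B) $ i $ j))" by (rule vec_le_entries)
  also have "\<dots> \<le> (\<Sum>i\<in>(UNIV::'m set). \<Sum>j\<in>(UNIV::'p set). real CARD('n) * (norm A * norm B))"
    by (intro sum_mono e)
  also have "\<dots> = real (CARD('m) * CARD('p) * CARD('n)) * norm A * norm B" by (simp add: algebra_simps)
  finally show ?thesis .
qed

lemma summable_cscale:
  assumes "summable (\<lambda>k. cmod (c k) * t ^ k)" "\<And>k. norm (X k) \<le> C * t ^ k"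
  shows "summable (\<lambda>k. cscale (c k) (X k :: complex^'n^'m))"
proof (rule summable_comparison_test[OF _ summable_mult[OF assms(1), of C]])
  have "norm (cscale (c n) (X n)) \<le> C * (cmod (c n) * t ^ n)" for n
    using mult_left_mono[OF assms(2)[of n] norm_ge_zero[of "c n"]] by (simp add: norm_cscale mult_ac)
  then show "\<exists>N. \<forall>n\<ge>N. norm (cscale (c n) (X n)) \<le> C * (cmod (c n) * t ^ n)" by blast
qed

lemma taylor_abs_summable:
  assumes "f holomorphic_on ball 0 r" "0 \<le> s" "s < r"
  shows "summable (\<lambda>k. cmod ((deriv ^^ k) f 0 / fact k) * s ^ k)"
proof -
  let ?w = "complex_of_real ((s + r)/2)"
  have w: "cmod ?w = \<bar>(s + r)/2\<bar>" by (rule norm_of_real)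
  then have wb: "?w \<in> ball 0 r" using assms by simp
  have "norm (complex_of_real s) = \<bar>s\<bar>" by (rule norm_of_real)
  with w assms have lt: "norm (complex_of_real s) < norm ?w" by simp
  have "(\<lambda>n. (deriv ^^ n) f 0 / fact n * (?w - 0) ^ n) sums f ?w"
    by (rule holomorphic_power_series[OF assms(1) wb])
  then have "summable (\<lambda>n. (deriv ^^ n) f 0 / fact n * ?w ^ n)" by (simp add: sums_summable)
  then have "summable (\<lambda>n. norm ((deriv ^^ n) f 0 / fact n * (complex_of_real s) ^ n))"
    by (rule powser_insidea[OF _ lt])
  moreover have "(\<lambda>n. norm ((deriv ^^ n) f 0 / fact n * (complex_of_real s) ^ n)) =
                 (\<lambda>k. cmod ((deriv ^^ k) f 0 / fact k) * s ^ k)"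
    by (rule ext) (simp only: norm_mult norm_power norm_of_real abs_of_nonneg[OF assms(2)])
  ultimately show ?thesis by simp
qed

lemma matpow_Suc': "matpow A (Suc n) = matpow A n ** A"
  by (induction n) (simp_all add: matpow_Suc matrix_mul_assoc)

lemma key:
  fixes r :: real and M :: "complex \<Rightarrow> complex^'n^'n" and m :: nat
    and Ms :: "nat \<Rightarrow> complex^'n^'n" and fs :: "nat \<Rightarrow> complex \<Rightarrow> complex"
    and B :: "complex \<Rightarrow> complex^'n^'n" and \<Lambda> :: "complex^'p^'p" and Y :: "complex^'p^'n"
  assumes r_pos: "r > 0"
    and fs_hol: "\<And>j. j < m \<Longrightarrow> fs j holomorphic_on ball 0 r"
    and M_eq: "\<And>z. z \<in> ball 0 r \<Longrightarrow> M z = (\<Sum>j<m. cscale (fs j z) (Ms j))"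
    and M0_inv: "invertible (M 0)"
    and B_eq: "\<And>z. z \<in> ball 0 r \<Longrightarrow> z \<noteq> 0 \<Longrightarrow>
                  B z = cscale (1 / z) (matrix_inv (M 0) ** (M 0 - M z))"
    and B_hol: "\<And>a b. (\<lambda>z. B z $ a $ b) holomorphic_on ball 0 r"
    and L_inv: "invertible \<Lambda>" and spec: "mspec \<Lambda> \<subseteq> ball 0 r"
  defines "Q \<equiv> \<lambda>i. cscale (1 / fact i) (Bcoef B i) ** Y ** matpow \<Lambda> i"
  shows "summable Q" "suminf Q = Y ** matrix_inv \<Lambda> \<longleftrightarrow> (\<Sum>j<m. Ms j ** Y ** matfun (fs j) \<Lambda>) = 0"
proof -
  define c where "c j k = (deriv ^^ k) (fs j) 0 / fact k" for j k
  obtain s C where sC: "0 < s" "s < r" "\<And>k. norm (matpow \<Lambda> k) \<le> C * s ^ k"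
    using powbound[OF spec r_pos] by blast
  have tay: "summable (\<lambda>k. cmod (c j k) * s ^ k)" if "j < m" for j
    unfolding c_def by (rule taylor_abs_summable[OF fs_hol[OF that]]) (use sC in auto)
  have mf: "summable (\<lambda>k. cscale (c j k) (matpow \<Lambda> k))" if "j < m" for j
    by (rule summable_cscale[OF tay[OF that] sC(3)])
  define Tj where "Tj j k = cscale (c j k) (Ms j ** Y ** matpow \<Lambda> k)" for j k
  have Tj_eq: "Tj j k = (Ms j ** Y) ** cscale (c j k) (matpow \<Lambda> k)" for j k
    by (simp add: Tj_def cscale_mmul_right)
  have Tj_sum: "summable (Tj j)" if "j < m" for j
    unfolding Tj_eq by (rule bounded_linear.summable[OF bounded_bilinear.bounded_linear_right[OF bb_mmul] mf[OF that]])
  have mf_eq: "Ms j ** Y ** matfun (fs j) \<Lambda> = suminf (Tj j)" if "j < m" for j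
    unfolding Tj_eq matfun_def c_def[symmetric]
    by (rule bounded_linear.suminf[OF bounded_bilinear.bounded_linear_right[OF bb_mmul] mf[OF that]])
  define T where "T k = Mcoef fs Ms m k ** Y ** matpow \<Lambda> k" for k
  have T_eq: "T k = (\<Sum>j<m. Tj j k)" for k
    by (simp add: T_def Tj_def Mcoef_def mmul_sum_left cscale_mmul_left c_def)
  have T_sum: "summable T" unfolding T_eq[abs_def] by (rule summable_sum) (use Tj_sum in auto)
  have MM: "(\<Sum>j<m. Ms j ** Y ** matfun (fs j) \<Lambda>) = suminf T"
  proof -
    have "(\<Sum>k. \<Sum>j<m. Tj j k) = (\<Sum>j<m. suminf (Tj j))"
      by (rule suminf_sum) (use Tj_sum in auto)
    also have "\<dots> = (\<Sum>j<m. Ms j ** Y ** matfun (fs j) \<Lambda>)"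
      by (rule sum.cong) (simp_all add: mf_eq)
    finally show ?thesis unfolding T_eq[abs_def] by simp
  qed
  define Linv where "Linv = matrix_inv \<Lambda>"
  define Minv where "Minv = matrix_inv (M 0)"
  have LL: "\<Lambda> ** Linv = mat 1" "Linv ** \<Lambda> = mat 1" using minv[OF L_inv] by (simp_all add: Linv_def)
  have MI: "M 0 ** Minv = mat 1" "Minv ** M 0 = mat 1" using minv[OF M0_inv] by (simp_all add: Minv_def)
  define W where "W i = Mcoef fs Ms m (Suc i) ** Y ** matpow \<Lambda> i" for i
  have TW: "T (Suc i) = W i ** \<Lambda>" for i
    by (simp add: T_def W_def matpow_Suc' matrix_mul_assoc)
  have WT: "W i = T (Suc i) ** Linv" for i
    by (simp add: TW matrix_mul_assoc[symmetric] LL)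
  have W_sum: "summable W"
    unfolding WT[abs_def]
    by (rule bounded_linear.summable[OF bounded_bilinear.bounded_linear_left[OF bb_mmul]])
       (simp add: summable_Suc_iff T_sum)
  have T0: "T 0 = M 0 ** Y"
    using Mcoef_0[OF r_pos M_eq] by (simp add: T_def)
  have "suminf T = T 0 + (\<Sum>i. T (Suc i))" using suminf_split_head[OF T_sum] by simp
  also have "(\<Sum>i. T (Suc i)) = (\<Sum>i. W i ** \<Lambda>)" by (simp add: TW)
  also have "\<dots> = suminf W ** \<Lambda>"
    by (rule bounded_linear.suminf[OF bounded_bilinear.bounded_linear_left[OF bb_mmul] W_sum, symmetric])
  finally have MM2: "(\<Sum>j<m. Ms j ** Y ** matfun (fs j) \<Lambda>) = M 0 ** Y + suminf W ** \<Lambda>"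
    using MM T0 by simp
  have QW: "Q i = - (Minv ** W i)" for i
    using Bcoef_eq[OF r_pos fs_hol M_eq B_eq B_hol, of i]
    by (simp add: Q_def W_def Minv_def matrix_mul_assoc)
  show Q_sum: "summable Q"
    unfolding QW[abs_def]
    by (rule bounded_linear.summable[OF bounded_linear_minus[OF bounded_bilinear.bounded_linear_right[OF bb_mmul]] W_sum])
  have Qs: "suminf Q = - (Minv ** suminf W)"
    unfolding QW[abs_def]
    by (rule bounded_linear.suminf[OF bounded_linear_minus[OF bounded_bilinear.bounded_linear_right[OF bb_mmul]] W_sum, symmetric])
  show "suminf Q = Y ** matrix_inv \<Lambda> \<longleftrightarrow> (\<Sum>j<m. Ms j ** Y ** matfun (fs j) \<Lambda>) = 0"
    unfolding MM2 Qs Linv_def[symmetric]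
  proof
    assume h: "- (Minv ** suminf W) = Y ** Linv"
    have "suminf W = M 0 ** (Minv ** suminf W)" by (simp add: matrix_mul_assoc MI)
    also have "\<dots> = - (M 0 ** (Y ** Linv))"
      using arg_cong[OF h, of "\<lambda>X. - (M 0 ** X)"] by simp
    finally have "suminf W ** \<Lambda> = - (M 0 ** (Y ** Linv)) ** \<Lambda>" by simp
    also have "\<dots> = - (M 0 ** Y)" by (simp add: matrix_mul_assoc[symmetric] LL)
    finally show "M 0 ** Y + suminf W ** \<Lambda> = 0" by simp
  next
    assume h: "M 0 ** Y + suminf W ** \<Lambda> = 0"
    then have h2: "suminf W ** \<Lambda> = - (M 0 ** Y)" by (simp add: eq_neg_iff_add_eq_0 add.commute)
    have "suminf W = (suminf W ** \<Lambda>) ** Linv" by (simp add: matrix_mul_assoc[symmetric] LL)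
    also have "\<dots> = - (M 0 ** Y ** Linv)" by (simp add: h2)
    finally have "- (Minv ** suminf W) = Minv ** (M 0 ** Y ** Linv)" by simp
    also have "\<dots> = Y ** Linv" by (simp add: matrix_mul_assoc MI)
    finally show "- (Minv ** suminf W) = Y ** Linv" .
  qed
qed



lemma mat_eq_cols:
  assumes "\<And>k. (A::complex^'p^'n) *v axis k 1 = B *v axis k 1" shows "A = B"
proof -
  have "A $ i $ k = B $ i $ k" for i k
    using mvec_axis_entry[of A k i] mvec_axis_entry[of B k i] assms[of k] by metis
  then show ?thesis by (simp add: vec_eq_iff)
qed

lemma bl_mvec_right: "bounded_linear (\<lambda>X::complex^'p^'n. X *v e)"
  unfolding linear_conv_bounded_linear[symmetric]
  by (rule linearI) (simp_all add: add_mvec scaleR_mvec)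

lemma bl_col_mult: "bounded_linear (\<lambda>X::complex^'p^'n. column k (X ** (L::complex^'q^'p)))"
  unfolding linear_conv_bounded_linear[symmetric] column_mvec
  by (rule linearI) (simp_all add: mmul_add_rdistrib add_mvec scaleR_mmul_left scaleR_mvec)

lemma part1:
  fixes B :: "complex \<Rightarrow> complex^'n^'n" and \<Psi> :: "real \<Rightarrow> complex^'p^'n" and \<Lambda> :: "complex^'p^'p"
  assumes L_inv: "invertible \<Lambda>" and ip: "inv_pair B \<Psi> (matrix_inv \<Lambda>)"
  shows "\<exists>Y. \<forall>\<theta>. \<Psi> \<theta> = Y ** mexp (\<theta> *\<^sub>R \<Lambda>)"
proof -
  let ?L = "matrix_inv \<Lambda>"
  define \<phi> where "\<phi> k t = column k (\<Psi> t)" for k t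
  have dom: "\<And>k. \<phi> k \<in> opB_dom B" and eq: "\<And>\<theta>. opBm B \<Psi> \<theta> = \<Psi> \<theta> ** ?L"
    using ip unfolding inv_pair_def \<phi>_def[abs_def] by auto
  have Cinf: "C_inf (\<phi> k)" for k using dom by (simp add: opB_dom_def)
  have dphi: "(\<phi> k has_vector_derivative vderiv (\<phi> k) t) (at t)" for k t
  proof -
    have "((vderiv ^^ 0) (\<phi> k) has_vector_derivative (vderiv ^^ Suc 0) (\<phi> k) t) (at t)"
      using Cinf[of k] unfolding C_inf_def by blast
    then show ?thesis by simp
  qed
  have cont: "continuous_on UNIV (\<phi> k)" for k
    by (intro continuous_at_imp_continuous_on ballI has_vector_derivative_continuous[OF dphi])
  define S where "S k = (\<Sum>i. Bser B (\<phi> k) i)" for k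
  have opB_eq: "opB B (\<phi> k) \<theta> = column k (\<Psi> \<theta> ** ?L)" for k \<theta>
  proof -
    have "column k (opBm B \<Psi> \<theta>) = opB B (\<phi> k) \<theta>"
      by (simp add: column_def opBm_def \<phi>_def[abs_def] vec_eq_iff)
    then show ?thesis using eq[of \<theta>] by simp
  qed
  have int_eq: "int0 (\<phi> k) = (\<lambda>\<theta>. column k (\<Psi> \<theta> ** ?L) - S k)" for k
    using opB_eq[of k] by (auto simp: opB_def S_def algebra_simps fun_eq_iff)
  define \<Psi>' where "\<Psi>' t = (\<chi> i k. vderiv (\<phi> k) t $ i)" for t
  define cm where "cm k v = ((\<chi> i j. if j = k then v $ i else (0::complex)) :: complex^'p^'n)" for k and v :: "complex^'n"
  have blcm: "bounded_linear (cm k :: complex^'n \<Rightarrow> complex^'p^'n)" for k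
    unfolding linear_conv_bounded_linear[symmetric] by (rule linearI) (simp_all add: cm_def vec_eq_iff)
  have Psum: "\<Psi> = (\<lambda>t. \<Sum>k\<in>UNIV. cm k (\<phi> k t))"
    by (simp add: fun_eq_iff vec_eq_iff cm_def \<phi>_def column_def)
  have Psum': "\<Psi>' t = (\<Sum>k\<in>UNIV. cm k (vderiv (\<phi> k) t))" for t
    by (simp add: vec_eq_iff cm_def \<Psi>'_def)
  have dPsi: "(\<Psi> has_vector_derivative \<Psi>' t) (at t)" for t
    unfolding Psum'
    by (subst Psum, rule has_vector_derivative_sum, rule bounded_linear.has_vector_derivative[OF blcm dphi])
  have key: "\<Psi> \<theta> = \<Psi>' \<theta> ** ?L" for \<theta>
  proof -
    have "column k (\<Psi> \<theta>) = column k (\<Psi>' \<theta> ** ?L)" for k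
    proof -
      have d1: "(int0 (\<phi> k) has_vector_derivative \<phi> k \<theta>) (at \<theta>)" by (rule int0_deriv[OF cont])
      have "((\<lambda>t. column k (\<Psi> t ** ?L)) has_vector_derivative column k (\<Psi>' \<theta> ** ?L)) (at \<theta>)"
        by (rule bounded_linear.has_vector_derivative[OF bl_col_mult dPsi])
      from has_vector_derivative_diff[OF this has_vector_derivative_const[of "S k"]]
      have "(int0 (\<phi> k) has_vector_derivative column k (\<Psi>' \<theta> ** ?L)) (at \<theta>)"
        by (simp add: int_eq)
      then have "\<phi> k \<theta> = column k (\<Psi>' \<theta> ** ?L)" by (rule vector_derivative_unique_at[OF d1])
      then show ?thesis by (simp add: \<phi>_def)
    qed
    then show ?thesis by (simp add: vec_eq_iff column_def)
  qed
  have d': "\<Psi>' \<theta> = \<Psi> \<theta> ** \<Lambda>" for \<theta>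
  proof -
    have "\<Psi> \<theta> ** \<Lambda> = \<Psi>' \<theta> ** (?L ** \<Lambda>)" by (simp add: key[of \<theta>] matrix_mul_assoc)
    also have "\<dots> = \<Psi>' \<theta>" using minv[OF L_inv] by simp
    finally show ?thesis by simp
  qed
  have "(\<Psi> has_vector_derivative \<Psi> t ** \<Lambda>) (at t)" for t using dPsi[of t] by (simp add: d')
  then have "\<Psi> \<theta> = \<Psi> 0 ** mexp (\<theta> *\<^sub>R \<Lambda>)" for \<theta> by (rule ode_unique)
  then show ?thesis by blast
qed

lemma part2:
  fixes r :: real and M :: "complex \<Rightarrow> complex^'n^'n" and m :: nat
    and Ms :: "nat \<Rightarrow> complex^'n^'n" and fs :: "nat \<Rightarrow> complex \<Rightarrow> complex"
    and B :: "complex \<Rightarrow> complex^'n^'n" and \<Lambda> :: "complex^'p^'p" and Y :: "complex^'p^'n"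
  assumes r_pos: "r > 0"
    and fs_hol: "\<And>j. j < m \<Longrightarrow> fs j holomorphic_on ball 0 r"
    and M_eq: "\<And>z. z \<in> ball 0 r \<Longrightarrow> M z = (\<Sum>j<m. cscale (fs j z) (Ms j))"
    and M0_inv: "invertible (M 0)"
    and B_eq: "\<And>z. z \<in> ball 0 r \<Longrightarrow> z \<noteq> 0 \<Longrightarrow>
                  B z = cscale (1 / z) (matrix_inv (M 0) ** (M 0 - M z))"
    and B_hol: "\<And>a b. (\<lambda>z. B z $ a $ b) holomorphic_on ball 0 r"
    and L_inv: "invertible \<Lambda>" and spec: "mspec \<Lambda> \<subseteq> ball 0 r"
  shows "inv_pair B (\<lambda>\<theta>. Y ** mexp (\<theta> *\<^sub>R \<Lambda>)) (matrix_inv \<Lambda>) \<longleftrightarrow>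
         (\<Sum>j<m. Ms j ** Y ** matfun (fs j) \<Lambda>) = 0"
proof -
  define Q where "Q = (\<lambda>i. cscale (1 / fact i) (Bcoef B i) ** Y ** matpow \<Lambda> i)"
  note K = key[OF r_pos fs_hol M_eq M0_inv B_eq B_hol L_inv spec, of Y, folded Q_def]
  let ?L = "matrix_inv \<Lambda>"
  define \<phi> where "\<phi> k t = column k (Y ** mexp (t *\<^sub>R \<Lambda>))" for k t
  have \<phi>_eq: "\<phi> k = (\<lambda>t. (Y ** mexp (t *\<^sub>R \<Lambda>)) *v axis k 1)" for k
    by (simp add: \<phi>_def column_mvec fun_eq_iff)
  have Bser_eq: "Bser B (\<phi> k) i = Q i *v axis k 1" for k i
    unfolding \<phi>_eq Bser_def vderiv_col0 Q_def by (simp add: matrix_vector_mul_assoc matrix_mul_assoc)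
  have Bs: "summable (Bser B (\<phi> k))" for k
    unfolding Bser_eq by (rule bounded_linear.summable[OF bl_mvec_right K(1)])
  have BS: "(\<Sum>i. Bser B (\<phi> k) i) = suminf Q *v axis k 1" for k
    unfolding Bser_eq by (rule bounded_linear.suminf[OF bl_mvec_right K(1), symmetric])
  have dom: "\<phi> k \<in> opB_dom B" for k
    using Bs[of k] C_inf_col[of Y \<Lambda> "axis k 1"] by (simp add: opB_dom_def \<phi>_eq)
  have opB_eq: "opB B (\<phi> k) \<theta> = (Y ** mexp (\<theta> *\<^sub>R \<Lambda>) ** ?L) *v axis k 1 - (Y ** ?L) *v axis k 1
                  + suminf Q *v axis k 1" for k \<theta>
    unfolding opB_def BS by (simp add: int0_col[OF L_inv] \<phi>_eq)
  have opBm_eq: "opBm B (\<lambda>\<theta>. Y ** mexp (\<theta> *\<^sub>R \<Lambda>)) \<theta> $ i $ k = opB B (\<phi> k) \<theta> $ i" for \<theta> i k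
    by (simp add: opBm_def \<phi>_def[abs_def])
  show ?thesis
  proof
    assume ip: "inv_pair B (\<lambda>\<theta>. Y ** mexp (\<theta> *\<^sub>R \<Lambda>)) ?L"
    have "suminf Q = Y ** ?L"
    proof (rule mat_eq_cols)
      fix k
      have "opBm B (\<lambda>\<theta>. Y ** mexp (\<theta> *\<^sub>R \<Lambda>)) 0 = Y ** mexp (0 *\<^sub>R \<Lambda>) ** ?L"
        using ip by (simp add: inv_pair_def)
      then have "opBm B (\<lambda>\<theta>. Y ** mexp (\<theta> *\<^sub>R \<Lambda>)) 0 $ i $ k = (Y ** ?L) $ i $ k" for i
        by simp
      then have "opB B (\<phi> k) 0 $ i = ((Y ** ?L) *v axis k 1) $ i" for i
        by (simp add: opBm_eq mvec_axis_entry)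
      then have "opB B (\<phi> k) 0 = (Y ** ?L) *v axis k 1" by (simp add: vec_eq_iff)
      then show "suminf Q *v axis k 1 = (Y ** ?L) *v axis k 1"
        by (simp add: opB_eq)
    qed
    then show "(\<Sum>j<m. Ms j ** Y ** matfun (fs j) \<Lambda>) = 0" using K(2) by simp
  next
    assume "(\<Sum>j<m. Ms j ** Y ** matfun (fs j) \<Lambda>) = 0"
    then have Qs: "suminf Q = Y ** ?L" using K(2) by simp
    show "inv_pair B (\<lambda>\<theta>. Y ** mexp (\<theta> *\<^sub>R \<Lambda>)) ?L"
      unfolding inv_pair_def
    proof (intro conjI allI)
      fix k show "(\<lambda>t. column k (Y ** mexp (t *\<^sub>R \<Lambda>))) \<in> opB_dom B"
        using dom[of k] by (simp add: \<phi>_def[abs_def])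
    next
      fix \<theta>
      show "opBm B (\<lambda>\<theta>. Y ** mexp (\<theta> *\<^sub>R \<Lambda>)) \<theta> = Y ** mexp (\<theta> *\<^sub>R \<Lambda>) ** ?L"
        by (simp add: vec_eq_iff opBm_eq opB_eq Qs mvec_axis_entry)
    qed
  qed
qed

theorem mainTheorem1:
  fixes r :: real and M :: "complex \<Rightarrow> complex^'n^'n" and m :: nat
    and Ms :: "nat \<Rightarrow> complex^'n^'n" and fs :: "nat \<Rightarrow> complex \<Rightarrow> complex"
    and B :: "complex \<Rightarrow> complex^'n^'n"
  assumes r_pos: "r > 0"
    and fs_hol: "\<And>j. j < m \<Longrightarrow> fs j holomorphic_on ball 0 r"
    and M_eq: "\<And>z. z \<in> ball 0 r \<Longrightarrow> M z = (\<Sum>j<m. cscale (fs j z) (Ms j))"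
    and M0_inv: "invertible (M 0)"
    and B_eq: "\<And>z. z \<in> ball 0 r \<Longrightarrow> z \<noteq> 0 \<Longrightarrow>
                  B z = cscale (1 / z) (matrix_inv (M 0) ** (M 0 - M z))"
    and B_hol: "\<And>a b. (\<lambda>z. B z $ a $ b) holomorphic_on ball 0 r"
  shows
    "(\<forall>(\<Psi> :: real \<Rightarrow> complex^'p^'n) (\<Lambda> :: complex^'p^'p).
        invertible \<Lambda> \<and> inv_pair B \<Psi> (matrix_inv \<Lambda>) \<longrightarrow>
        (\<exists>Y :: complex^'p^'n. \<forall>\<theta>. \<Psi> \<theta> = Y ** mexp (\<theta> *\<^sub>R \<Lambda>)))
     \<and>
     (\<forall>(\<Lambda> :: complex^'p^'p) (Y :: complex^'p^'n).
        invertible \<Lambda> \<and> mspec \<Lambda> \<subseteq> ball 0 r \<longrightarrow>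
        (inv_pair B (\<lambda>\<theta>. Y ** mexp (\<theta> *\<^sub>R \<Lambda>)) (matrix_inv \<Lambda>)
         \<longleftrightarrow> (\<Sum>j<m. Ms j ** Y ** matfun (fs j) \<Lambda>) = 0))"
proof (intro conjI allI impI)
  fix \<Psi> :: "real \<Rightarrow> complex^'p^'n" and \<Lambda> :: "complex^'p^'p"
  assume "invertible \<Lambda> \<and> inv_pair B \<Psi> (matrix_inv \<Lambda>)"
  then show "\<exists>Y :: complex^'p^'n. \<forall>\<theta>. \<Psi> \<theta> = Y ** mexp (\<theta> *\<^sub>R \<Lambda>)"
    using part1 by blast
next
  fix \<Lambda> :: "complex^'p^'p" and Y :: "complex^'p^'n"
  assume "invertible \<Lambda> \<and> mspec \<Lambda> \<subseteq> ball 0 r"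
  then show "inv_pair B (\<lambda>\<theta>. Y ** mexp (\<theta> *\<^sub>R \<Lambda>)) (matrix_inv \<Lambda>)
         \<longleftrightarrow> (\<Sum>j<m. Ms j ** Y ** matfun (fs j) \<Lambda>) = 0"
    using part2[OF r_pos fs_hol M_eq M0_inv B_eq B_hol] by blast
qed


end
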